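(* Let $r\ge2$ and $h_s:=e_s-f_s\in\mathbb{K}[\mathcal{S}_{r+1}]$. Then for every Young tableau $t$ (standard or not) of frame $(r,1)\vdash r+1$, one has $h_s\cdot e_t\neq h_s$. In particular no such $e_t$ generates the minimal left ideal $\mathbb{K}[\mathcal{S}_{r+1}]\cdot h_s$.
   Context: $\mathbb{K}\in\{\mathbb{R},\mathbb{C}\}$; group ring product $(p\cdot q)(i)=p(q(i))$. $\tilde{\mathcal S}_r=\{p\in\mathcal{S}_{r+1}:p(r+1)=r+1\}$, $e_s=\frac1{r!}\sum_{p\in\tilde{\mathcal S}_r}p$, $f_s=\frac1{(r+1)!}\sum_{p\in\mathcal{S}_{r+1}}p$. For a Young tableau $t$ (a filling of a Young frame with $1,\ldots,r+1$, each once), $\mathcal{H}_t$, $\mathcal{V}_t$ are the row- and column-preserving permutation groups, $y_t=\sum_{p\in\mathcal{H}_t}\sum_{q\in\mathcal{V}_t}\mathrm{sign}(q)\,p\cdot q$, and $e_t=\mu_ty_t$ with the nonzero constant $\mu_t$ making $e_t$ idempotent. The frame $(r,1)$ has a first row of $r$ boxes and a second row of one box. *)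

theory Defs
  imports Complex_Main "HOL-Combinatorics.Permutations"
begin

definition Sym :: "nat \<Rightarrow> (nat \<Rightarrow> nat) set" where
  "Sym n = {p. p permutes {1..n}}"

text \<open>Elements of the group ring K[S_n] are represented as coefficient functions
  (nat \<Rightarrow> nat) \<Rightarrow> K; only the values on Sym n matter.\<close>
definition gr_mult :: "nat \<Rightarrow> ((nat \<Rightarrow> nat) \<Rightarrow> 'a::comm_ring_1) \<Rightarrow> ((nat \<Rightarrow> nat) \<Rightarrow> 'a) \<Rightarrow> ((nat \<Rightarrow> nat) \<Rightarrow> 'a)" where
  "gr_mult n x y = (\<lambda>\<sigma>. \<Sum>p\<in>Sym n. \<Sum>q\<in>Sym n. if p \<circ> q = \<sigma> then x p * y q else 0)"

definition gr_elems :: "nat \<Rightarrow> ((nat \<Rightarrow> nat) \<Rightarrow> 'a::comm_ring_1) set" where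
  "gr_elems n = {x. \<forall>\<sigma>. \<sigma> \<notin> Sym n \<longrightarrow> x \<sigma> = 0}"

definition gr_left_ideal :: "nat \<Rightarrow> ((nat \<Rightarrow> nat) \<Rightarrow> 'a::comm_ring_1) \<Rightarrow> ((nat \<Rightarrow> nat) \<Rightarrow> 'a) set" where
  "gr_left_ideal n x = {gr_mult n a x | a. a \<in> gr_elems n}"

definition e_s :: "nat \<Rightarrow> ((nat \<Rightarrow> nat) \<Rightarrow> 'a::field)" where
  "e_s r = (\<lambda>\<sigma>. if \<sigma> \<in> Sym (r+1) \<and> \<sigma> (r+1) = r+1 then 1 / of_nat (fact r) else 0)"

definition f_s :: "nat \<Rightarrow> ((nat \<Rightarrow> nat) \<Rightarrow> 'a::field)" where
  "f_s r = (\<lambda>\<sigma>. if \<sigma> \<in> Sym (r+1) then 1 / of_nat (fact (r+1)) else 0)"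

definition h_s :: "nat \<Rightarrow> ((nat \<Rightarrow> nat) \<Rightarrow> 'a::field)" where
  "h_s r = (\<lambda>\<sigma>. e_s r \<sigma> - f_s r \<sigma>)"

text \<open>Young frames as sets of boxes (row, column), 1-indexed.
  The frame (r,1): first row has r boxes, second row has one box.\<close>
definition frame_r1 :: "nat \<Rightarrow> (nat \<times> nat) set" where
  "frame_r1 r = {(1, j) | j. j \<in> {1..r}} \<union> {(2, 1)}"

definition young_tableau :: "nat \<Rightarrow> (nat \<times> nat) set \<Rightarrow> (nat \<times> nat \<Rightarrow> nat) \<Rightarrow> bool" where
  "young_tableau n F T \<longleftrightarrow> bij_betw T F {1..n}"

definition row_group :: "nat \<Rightarrow> (nat \<times> nat) set \<Rightarrow> (nat \<times> nat \<Rightarrow> nat) \<Rightarrow> (nat \<Rightarrow> nat) set" where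
  "row_group n F T = {p \<in> Sym n. \<forall>b\<in>F. \<exists>b'\<in>F. fst b' = fst b \<and> p (T b) = T b'}"

definition col_group :: "nat \<Rightarrow> (nat \<times> nat) set \<Rightarrow> (nat \<times> nat \<Rightarrow> nat) \<Rightarrow> (nat \<Rightarrow> nat) set" where
  "col_group n F T = {q \<in> Sym n. \<forall>b\<in>F. \<exists>b'\<in>F. snd b' = snd b \<and> q (T b) = T b'}"

definition young_y :: "nat \<Rightarrow> (nat \<times> nat) set \<Rightarrow> (nat \<times> nat \<Rightarrow> nat) \<Rightarrow> ((nat \<Rightarrow> nat) \<Rightarrow> 'a::comm_ring_1)" where
  "young_y n F T = (\<lambda>\<sigma>. \<Sum>p\<in>row_group n F T. \<Sum>q\<in>col_group n F T.
      if p \<circ> q = \<sigma> then of_int (sign q) else 0)"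

end

theory Submission
  imports Defs
begin

lemma Sym_comp_tau:
  assumes "\<tau> permutes {1..n}" "q \<in> Sym n"
  shows "q \<circ> \<tau> \<in> Sym n"
  using assms permutes_compose unfolding Sym_def by blast

lemma gr_mult_anti:
  fixes y :: "(nat \<Rightarrow> nat) \<Rightarrow> 'a::comm_ring_1"
  assumes tp: "\<tau> permutes {1..n}" and inv: "\<tau> \<circ> \<tau> = id"
    and anti: "\<And>q. y (q \<circ> \<tau>) = - y q"
  shows "gr_mult n x y (\<sigma> \<circ> \<tau>) = - gr_mult n x y \<sigma>"
proof -
  have eq: "p \<circ> (q \<circ> \<tau>) = \<sigma> \<circ> \<tau> \<longleftrightarrow> p \<circ> q = \<sigma>" for p q
  proof
    assume "p \<circ> (q \<circ> \<tau>) = \<sigma> \<circ> \<tau>"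
    then have "p \<circ> (q \<circ> \<tau>) \<circ> \<tau> = \<sigma> \<circ> \<tau> \<circ> \<tau>" by simp
    then show "p \<circ> q = \<sigma>" using inv by (simp add: comp_assoc)
  qed auto
  have "gr_mult n x y (\<sigma> \<circ> \<tau>) = (\<Sum>p\<in>Sym n. \<Sum>q\<in>Sym n. if p \<circ> q = \<sigma> \<circ> \<tau> then x p * y q else 0)"
    by (simp add: gr_mult_def)
  also have "\<dots> = (\<Sum>p\<in>Sym n. \<Sum>q\<in>Sym n. if p \<circ> (q \<circ> \<tau>) = \<sigma> \<circ> \<tau> then x p * y (q \<circ> \<tau>) else 0)"
  proof (rule sum.cong[OF refl])
    fix p
    show "(\<Sum>q\<in>Sym n. if p \<circ> q = \<sigma> \<circ> \<tau> then x p * y q else 0) =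
      (\<Sum>q\<in>Sym n. if p \<circ> (q \<circ> \<tau>) = \<sigma> \<circ> \<tau> then x p * y (q \<circ> \<tau>) else 0)"
      apply (rule sum.reindex_bij_witness[where i = "\<lambda>q. q \<circ> \<tau>" and j = "\<lambda>q. q \<circ> \<tau>"])
      using Sym_comp_tau[OF tp] inv by (auto simp: comp_assoc)
  qed
  also have "\<dots> = (\<Sum>p\<in>Sym n. \<Sum>q\<in>Sym n. - (if p \<circ> q = \<sigma> then x p * y q else 0))"
    by (intro sum.cong refl) (simp only: eq anti, simp)
  also have "\<dots> = - gr_mult n x y \<sigma>"
    by (simp add: gr_mult_def sum_negf)
  finally show ?thesis .
qed

lemma young_y_anti:
  assumes tp: "\<tau> permutes {1..n}" and inv: "\<tau> \<circ> \<tau> = id"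
    and sg: "sign \<tau> = -1"
    and tc: "\<tau> \<in> col_group n F T"
  shows "(young_y n F T (q \<circ> \<tau>) :: 'a::comm_ring_1) = - young_y n F T q"
proof -
  let ?V = "col_group n F T"
  have clos: "v \<circ> \<tau> \<in> ?V" if vV: "v \<in> ?V" for v
  proof -
    have "v \<circ> \<tau> \<in> Sym n" using that tp Sym_comp_tau unfolding col_group_def by blast
    moreover have "\<forall>b\<in>F. \<exists>b'\<in>F. snd b' = snd b \<and> (v \<circ> \<tau>) (T b) = T b'"
    proof
      fix b assume "b \<in> F"
      obtain b'' where 1: "b'' \<in> F" "snd b'' = snd b" "\<tau> (T b) = T b''"
        using tc \<open>b \<in> F\<close> unfolding col_group_def by blast
      obtain b' where 2: "b' \<in> F" "snd b' = snd b''" "v (T b'') = T b'"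
        using vV 1 unfolding col_group_def by blast
      show "\<exists>b'\<in>F. snd b' = snd b \<and> (v \<circ> \<tau>) (T b) = T b'" using 1 2 by auto
    qed
    ultimately show ?thesis unfolding col_group_def by blast
  qed
  have sgn: "sign (v \<circ> \<tau>) = - sign v" if "v \<in> ?V" for v
  proof -
    have "permutation v" using that unfolding col_group_def Sym_def
      by (auto intro: permutes_imp_permutation)
    moreover have "permutation \<tau>" using tp by (auto intro: permutes_imp_permutation)
    ultimately show ?thesis using sg by (simp add: sign_compose)
  qed
  have eq: "p \<circ> (v \<circ> \<tau>) = q \<circ> \<tau> \<longleftrightarrow> p \<circ> v = q" for p v
  proof
    assume "p \<circ> (v \<circ> \<tau>) = q \<circ> \<tau>"
    then have "p \<circ> (v \<circ> \<tau>) \<circ> \<tau> = q \<circ> \<tau> \<circ> \<tau>" by simp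
    then show "p \<circ> v = q" using inv by (simp add: comp_assoc)
  qed auto
  have "young_y n F T (q \<circ> \<tau>) = (\<Sum>p\<in>row_group n F T. \<Sum>v\<in>?V.
      if p \<circ> v = q \<circ> \<tau> then (of_int (sign v) :: 'a) else 0)"
    by (simp add: young_y_def)
  also have "\<dots> = (\<Sum>p\<in>row_group n F T. \<Sum>v\<in>?V.
      if p \<circ> (v \<circ> \<tau>) = q \<circ> \<tau> then (of_int (sign (v \<circ> \<tau>)) :: 'a) else 0)"
  proof (rule sum.cong[OF refl])
    fix p
    show "(\<Sum>v\<in>?V. if p \<circ> v = q \<circ> \<tau> then (of_int (sign v) :: 'a) else 0) =
      (\<Sum>v\<in>?V. if p \<circ> (v \<circ> \<tau>) = q \<circ> \<tau> then of_int (sign (v \<circ> \<tau>)) else 0)"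
      apply (rule sum.reindex_bij_witness[where i = "\<lambda>q. q \<circ> \<tau>" and j = "\<lambda>q. q \<circ> \<tau>"])
      using clos inv by (auto simp: comp_assoc)
  qed
  also have "\<dots> = (\<Sum>p\<in>row_group n F T. \<Sum>v\<in>?V.
      - (if p \<circ> v = q then (of_int (sign v) :: 'a) else 0))"
    by (intro sum.cong refl) (simp add: eq sgn)
  also have "\<dots> = - young_y n F T q"
    by (simp add: young_y_def sum_negf)
  finally show ?thesis .
qed

lemma h_vals:
  fixes \<tau> :: "nat \<Rightarrow> nat"
  assumes "r \<ge> 2" "\<tau> \<in> Sym (r+1)"
  shows "(h_s r \<tau> :: 'a::field_char_0) \<noteq> - h_s r id"
proof -
  have idS: "id \<in> Sym (r+1)" by (simp add: Sym_def permutes_id)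
  define F where "F = (of_nat (fact r) :: 'a)"
  have F0: "F \<noteq> 0" by (simp add: F_def)
  have fr: "(of_nat (fact (r+1)) :: 'a) = (of_nat r + 1) * F"
    by (simp add: F_def fact_Suc algebra_simps)
  have r1: "(of_nat r + 1 :: 'a) \<noteq> 0" 
    using of_nat_eq_0_iff[of "Suc r", where 'a='a] by (simp add: add.commute)
  have hid: "(h_s r id :: 'a) = 1 / F - 1 / ((of_nat r + 1) * F)"
    using idS by (simp add: h_s_def e_s_def f_s_def fr F_def[symmetric] algebra_simps del: of_nat_fact)
  show ?thesis
  proof (cases "\<tau> (r+1) = r+1")
    case True
    then have "(h_s r \<tau> :: 'a) = h_s r id" using assms(2) idS by (simp add: h_s_def e_s_def f_s_def)
    moreover have "(h_s r id :: 'a) \<noteq> 0"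
    proof
      assume "(h_s r id :: 'a) = 0"
      moreover have "(1 / F - 1 / ((of_nat r + 1) * F)) = of_nat r / ((of_nat r + 1) * F)"
      proof -
        have "(of_nat r + 1) * F \<noteq> 0" using F0 r1 by simp
        then show ?thesis using F0 by (simp add: divide_simps)
      qed
      moreover have "(of_nat r::'a) \<noteq> 0" using assms(1) by simp
      moreover have nz: "(of_nat r + 1) * F \<noteq> 0" using F0 r1 by simp
      ultimately have "h_s r id * ((of_nat r + 1) * F) = of_nat r" using hid by simp
      then show False using \<open>(h_s r id :: 'a) = 0\<close> \<open>(of_nat r::'a) \<noteq> 0\<close> by simp
    qed
    ultimately show ?thesis by (simp add: eq_neg_iff_add_eq_0 flip: mult_2)
  next
    case False
    then have ht: "(h_s r \<tau> :: 'a) = - (1 / ((of_nat r + 1) * F))" using assms(2)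
      by (simp add: h_s_def e_s_def f_s_def fr F_def[symmetric] algebra_simps del: of_nat_fact)
    show ?thesis
    proof
      assume "(h_s r \<tau> :: 'a) = - h_s r id"
      then have "- (1 / ((of_nat r + 1) * F)) = - (1 / F - 1 / ((of_nat r + 1) * F))"
        using ht hid by metis
      moreover have "(of_nat r + 1) * F \<noteq> 0" using F0 r1 by simp
      ultimately have "(of_nat r + 1) * F = 2 * F" using F0 by (simp add: field_simps)
      then have "(of_nat r :: 'a) = of_nat 1" using F0 by (simp add: algebra_simps)
      then have "r = 1" using of_nat_eq_iff by blast
      then show False using assms(1) by simp
    qed
  qed
qed

lemma main_generic:
  fixes r :: nat and T :: "nat \<times> nat \<Rightarrow> nat" and \<mu> :: "'a::field_char_0"
  assumes r2: "r \<ge> 2"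
    and yt: "young_tableau (r+1) (frame_r1 r) T"
  defines "e \<equiv> (\<lambda>\<sigma>. \<mu> * young_y (r+1) (frame_r1 r) T \<sigma>)"
  shows "gr_mult (r+1) (h_s r) e \<noteq> h_s r \<and> gr_left_ideal (r+1) e \<noteq> gr_left_ideal (r+1) (h_s r)"
proof -
  let ?n = "r+1" and ?F = "frame_r1 r"
  define a where "a = T (1,1)"
  define b where "b = T (2,1)"
  define \<tau> where "\<tau> = Transposition.transpose a b"
  have bij: "bij_betw T ?F {1..?n}" using yt by (simp add: young_tableau_def)
  have inF: "(1,1) \<in> ?F" "(2,1) \<in> ?F" using r2 by (auto simp: frame_r1_def)
  have ab: "a \<in> {1..?n}" "b \<in> {1..?n}" using bij inF unfolding a_def b_def
    by (auto dest: bij_betw_apply)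
  have anb: "a \<noteq> b" using bij inF unfolding a_def b_def bij_betw_def inj_on_def by fastforce
  have tp: "\<tau> permutes {1..?n}" using ab by (simp add: \<tau>_def permutes_swap_id)
  have inv: "\<tau> \<circ> \<tau> = id" by (simp add: \<tau>_def)
  have sg: "sign \<tau> = -1" using anb by (simp add: \<tau>_def sign_swap_id)
  have tS: "\<tau> \<in> Sym ?n" using tp by (simp add: Sym_def)
  have tc: "\<tau> \<in> col_group ?n ?F T"
    unfolding col_group_def
  proof (intro CollectI conjI ballI tS)
    fix c assume c: "c \<in> ?F"
    show "\<exists>b'\<in>?F. snd b' = snd c \<and> \<tau> (T c) = T b'"
    proof (cases "c = (1,1) \<or> c = (2,1)")
      case True
      then show ?thesis
      proof
        assume "c = (1,1)" then show ?thesis using inF(2) by (intro bexI[of _ "(2,1)"]) (auto simp: \<tau>_def a_def b_def)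
      next
        assume "c = (2,1)" then show ?thesis using inF(1) by (intro bexI[of _ "(1,1)"]) (auto simp: \<tau>_def a_def b_def)
      qed
    next
      case False
      then have "T c \<noteq> a" "T c \<noteq> b" using bij inF c unfolding a_def b_def bij_betw_def inj_on_def
        by metis+
      then have "\<tau> (T c) = T c" by (simp add: \<tau>_def)
      then show ?thesis using c by blast
    qed
  qed
  have eanti: "e (q \<circ> \<tau>) = - e q" for q
    using young_y_anti[OF tp inv sg tc, where 'a='a] by (simp add: e_def)
  have key: "gr_mult ?n x e \<tau> = - gr_mult ?n x e id" for x
    using gr_mult_anti[where y=e and x=x and \<sigma>=id, OF tp inv eanti] by simp
  have hv: "(h_s r \<tau> :: 'a) \<noteq> - h_s r id" using h_vals[OF r2 tS] .
  have idS: "id \<in> Sym ?n" by (simp add: Sym_def permutes_id)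
  define d where "d = (\<lambda>\<sigma>::nat\<Rightarrow>nat. if \<sigma> = id then 1 else (0::'a))"
  have dE: "d \<in> gr_elems ?n" using idS by (auto simp: gr_elems_def d_def)
  have dh: "gr_mult ?n d (h_s r) \<sigma> = (h_s r \<sigma> :: 'a)" if "\<sigma> \<in> Sym ?n" for \<sigma>
  proof -
    have "gr_mult ?n d (h_s r) \<sigma> = (\<Sum>q\<in>Sym ?n. if id \<circ> q = \<sigma> then d id * h_s r q else 0)"
    proof -
      have fin: "finite (Sym ?n)" by (simp add: Sym_def finite_permutations)
      have z: "(\<Sum>p\<in>Sym ?n - {id}. \<Sum>q\<in>Sym ?n. if p \<circ> q = \<sigma> then d p * h_s r q else 0) = 0"
        by (intro sum.neutral ballI) (auto simp: d_def)
      show ?thesis unfolding gr_mult_def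
        by (subst sum.remove[OF fin idS]) (simp only: z add_0_right)
    qed
    also have "\<dots> = (\<Sum>q\<in>Sym ?n. if q = \<sigma> then (h_s r q :: 'a) else 0)"
      by (rule sum.cong) (auto simp: d_def)
    also have "\<dots> = h_s r \<sigma>" using that finite_permutations[of "{1..?n}"] by (simp add: Sym_def)
    finally show ?thesis .
  qed
  have hl: "(h_s r :: (nat \<Rightarrow> nat) \<Rightarrow> 'a) \<in> gr_left_ideal ?n (h_s r)"
    unfolding gr_left_ideal_def
  proof (intro CollectI exI conjI)
    show "d \<in> gr_elems ?n" by (rule dE)
    show "h_s r = gr_mult ?n d (h_s r)"
    proof
      fix \<sigma>
      show "h_s r \<sigma> = gr_mult ?n d (h_s r) \<sigma>"
      proof (cases "\<sigma> \<in> Sym ?n")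
        case True then show ?thesis using dh by simp
      next
        case False
        have "h_s r \<sigma> = 0" using False by (simp add: h_s_def e_s_def f_s_def)
        moreover have "gr_mult ?n d (h_s r) \<sigma> = 0" unfolding gr_mult_def
          using False by (intro sum.neutral ballI) (auto simp: d_def)
        ultimately show ?thesis by simp
      qed
    qed
  qed
  show ?thesis
  proof
    show "gr_mult ?n (h_s r) e \<noteq> h_s r"
    proof
      assume "gr_mult ?n (h_s r) e = h_s r"
      then show False using key[of "h_s r"] hv by simp
    qed
    show "gr_left_ideal ?n e \<noteq> gr_left_ideal ?n (h_s r)"
    proof
      assume "gr_left_ideal ?n e = gr_left_ideal ?n (h_s r)"
      then have "h_s r \<in> gr_left_ideal ?n e" using hl by simp
      then obtain x where "h_s r = gr_mult ?n x e" unfolding gr_left_ideal_def by blast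
      then show False using key[of x] hv by simp
    qed
  qed
qed

theorem theorem5:
  fixes r :: nat and T :: "nat \<times> nat \<Rightarrow> nat"
  assumes "r \<ge> 2"
    and "young_tableau (r+1) (frame_r1 r) T"
  shows "(\<forall>\<mu>::real. \<mu> \<noteq> 0 \<longrightarrow>
            (let e = (\<lambda>\<sigma>. \<mu> * young_y (r+1) (frame_r1 r) T \<sigma>) in
               gr_mult (r+1) e e = e \<longrightarrow>
               gr_mult (r+1) (h_s r) e \<noteq> h_s r
               \<and> gr_left_ideal (r+1) e \<noteq> gr_left_ideal (r+1) (h_s r)))
       \<and> (\<forall>\<mu>::complex. \<mu> \<noteq> 0 \<longrightarrow>
            (let e = (\<lambda>\<sigma>. \<mu> * young_y (r+1) (frame_r1 r) T \<sigma>) in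
               gr_mult (r+1) e e = e \<longrightarrow>
               gr_mult (r+1) (h_s r) e \<noteq> h_s r
               \<and> gr_left_ideal (r+1) e \<noteq> gr_left_ideal (r+1) (h_s r)))"
  using main_generic[OF assms, where 'a=real] main_generic[OF assms, where 'a=complex]
  by (simp add: Let_def)

end
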